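(* Let $|\text{-}|:\mathcal E\to\mathcal B$ be a concrete category over $\mathcal B$. Then the $\mathcal Q_{\mathcal B}$-category $\overline{\mathcal E}$ is tensored if and only if $\mathcal E$ is cofibred over $\mathcal B$ and, for all $X\in\mathrm{ob}\,\mathcal E$, $T\in\mathrm{ob}\,\mathcal B$ and every subset $\mathbf f\subseteq\mathcal B(|X|,T)$, there is $Y\in\mathrm{ob}\,\mathcal E$ with $|Y|=T$ and $$\overline{\mathcal E}(Y,Z)=\bigcap_{f\in\mathbf f}\overline{\mathcal E}(f\star X,Z)\quad\text{for all }Z\in\mathrm{ob}\,\mathcal E.$$
   Context: $\mathcal B$ is a category with small hom-sets; a concrete category over $\mathcal B$ is a category with a faithful functor $|\text{-}|:\mathcal E\to\mathcal B$; a map $f:|X|\to|Y|$ is an $\mathcal E$-morphism if it is $|f'|$ for some $f':X\to Y$. $\mathcal E$ is cofibred if for every $X\in\mathrm{ob}\,\mathcal E$ and every map $f:|X|\to T$ there is an object $f\star X$ with $|f\star X|=T$ such that a map $g:T\to|Z|$ is an $\mathcal E$-morphism $f\star X\to Z$ iff $g\circ f$ is an $\mathcal E$-morphism $X\to Z$. The free quantaloid $\mathcal Q_{\mathcal B}$ has the objects of $\mathcal B$, arrows $S\to T$ all subsets of $\mathcal B(S,T)$ ordered by inclusion, composition $\mathbf g\circ\mathbf f=\{g\circ f\mid f\in \mathbf f,g\in\mathbf g\}$; for $\mathbf f\subseteq\mathcal B(S,T)$, $\mathbf h\subseteq\mathcal B(S,U)$, $\mathbf h\swarrow\mathbf f=\{g\in\mathcal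 B(T,U)\mid\forall f\in\mathbf f: g\circ f\in\mathbf h\}$. $\overline{\mathcal E}$ is the $\mathcal Q_{\mathcal B}$-category with objects of $\mathcal E$, extents $|X|$, and $\overline{\mathcal E}(X,Y)$ the set of $\mathcal E$-morphisms $|X|\to|Y|$. $\overline{\mathcal E}$ is tensored if for all $X\in\mathrm{ob}\,\mathcal E$ and all $\mathbf u\subseteq\mathcal B(|X|,T)$ there is $Y$ with $|Y|=T$ and $\overline{\mathcal E}(Y,Z)=\overline{\mathcal E}(X,Z)\swarrow\mathbf u$ for all $Z$. *)

theory Defs
  imports Main
begin

text \<open>A category given by its object set, hom-sets, composition (Comp g f = g after f)
  and identities. Hom-sets are HOL sets, hence small.\<close>
record ('o, 'm) cat =
  Ob   :: "'o set"
  Hom  :: "'o \<Rightarrow> 'o \<Rightarrow> 'm set"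
  Comp :: "'m \<Rightarrow> 'm \<Rightarrow> 'm"
  Idm  :: "'o \<Rightarrow> 'm"

definition category :: "('o, 'm) cat \<Rightarrow> bool" where
  "category C \<longleftrightarrow>
     (\<forall>A\<in>Ob C. Idm C A \<in> Hom C A A) \<and>
     (\<forall>A\<in>Ob C. \<forall>B\<in>Ob C. \<forall>C'\<in>Ob C. \<forall>f g. f \<in> Hom C A B \<and> g \<in> Hom C B C'
         \<longrightarrow> Comp C g f \<in> Hom C A C') \<and>
     (\<forall>A\<in>Ob C. \<forall>B\<in>Ob C. \<forall>f\<in>Hom C A B.
         Comp C f (Idm C A) = f \<and> Comp C (Idm C B) f = f) \<and>
     (\<forall>A\<in>Ob C. \<forall>B\<in>Ob C. \<forall>C'\<in>Ob C. \<forall>D\<in>Ob C. \<forall>f g h.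
         f \<in> Hom C A B \<and> g \<in> Hom C B C' \<and> h \<in> Hom C C' D
         \<longrightarrow> Comp C h (Comp C g f) = Comp C (Comp C h g) f) \<and>
     (\<forall>A\<in>Ob C. \<forall>B\<in>Ob C. \<forall>A'\<in>Ob C. \<forall>B'\<in>Ob C. \<forall>f.
         f \<in> Hom C A B \<and> f \<in> Hom C A' B' \<longrightarrow> A = A' \<and> B = B')"

text \<open>A concrete category over B: a category E with a faithful functor
  |-| given on objects by ext and on morphisms by F.\<close>
definition concrete_category ::
  "('o, 'm) cat \<Rightarrow> ('e, 'f) cat \<Rightarrow> ('e \<Rightarrow> 'o) \<Rightarrow> ('f \<Rightarrow> 'm) \<Rightarrow> bool" where
  "concrete_category B E ext F \<longleftrightarrow>
     category B \<and> category E \<and>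
     (\<forall>X\<in>Ob E. ext X \<in> Ob B) \<and>
     (\<forall>X\<in>Ob E. \<forall>Y\<in>Ob E. \<forall>f\<in>Hom E X Y. F f \<in> Hom B (ext X) (ext Y)) \<and>
     (\<forall>X\<in>Ob E. F (Idm E X) = Idm B (ext X)) \<and>
     (\<forall>X\<in>Ob E. \<forall>Y\<in>Ob E. \<forall>Z\<in>Ob E. \<forall>f g. f \<in> Hom E X Y \<and> g \<in> Hom E Y Z
         \<longrightarrow> F (Comp E g f) = Comp B (F g) (F f)) \<and>
     (\<forall>X\<in>Ob E. \<forall>Y\<in>Ob E. \<forall>f\<in>Hom E X Y. \<forall>f'\<in>Hom E X Y. F f = F f' \<longrightarrow> f = f')"

definition is_Emor :: "('e, 'f) cat \<Rightarrow> ('f \<Rightarrow> 'm) \<Rightarrow> 'e \<Rightarrow> 'e \<Rightarrow> 'm \<Rightarrow> bool" where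
  "is_Emor E F X Y g \<longleftrightarrow> (\<exists>f'\<in>Hom E X Y. F f' = g)"

definition Ebar :: "('o, 'm) cat \<Rightarrow> ('e, 'f) cat \<Rightarrow> ('e \<Rightarrow> 'o) \<Rightarrow> ('f \<Rightarrow> 'm) \<Rightarrow> 'e \<Rightarrow> 'e \<Rightarrow> 'm set" where
  "Ebar B E ext F X Y = {g \<in> Hom B (ext X) (ext Y). is_Emor E F X Y g}"

text \<open>Left implication in the free quantaloid Q_B: for f \<subseteq> B(S,T), h \<subseteq> B(S,U),
  h \<swarrow> f = {g \<in> B(T,U). \<forall>f\<in>f. g \<circ> f \<in> h}.\<close>
definition lift_impl :: "('o, 'm) cat \<Rightarrow> 'o \<Rightarrow> 'o \<Rightarrow> 'm set \<Rightarrow> 'm set \<Rightarrow> 'm set" where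
  "lift_impl B T U h fs = {g \<in> Hom B T U. \<forall>f\<in>fs. Comp B g f \<in> h}"

definition is_cofib_obj ::
  "('o, 'm) cat \<Rightarrow> ('e, 'f) cat \<Rightarrow> ('e \<Rightarrow> 'o) \<Rightarrow> ('f \<Rightarrow> 'm) \<Rightarrow> 'e \<Rightarrow> 'o \<Rightarrow> 'm \<Rightarrow> 'e \<Rightarrow> bool" where
  "is_cofib_obj B E ext F X T f Y \<longleftrightarrow>
     Y \<in> Ob E \<and> ext Y = T \<and>
     (\<forall>Z\<in>Ob E. \<forall>g\<in>Hom B T (ext Z).
        is_Emor E F Y Z g \<longleftrightarrow> is_Emor E F X Z (Comp B g f))"

definition cofibred ::
  "('o, 'm) cat \<Rightarrow> ('e, 'f) cat \<Rightarrow> ('e \<Rightarrow> 'o) \<Rightarrow> ('f \<Rightarrow> 'm) \<Rightarrow> bool" where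
  "cofibred B E ext F \<longleftrightarrow>
     (\<forall>X\<in>Ob E. \<forall>T\<in>Ob B. \<forall>f\<in>Hom B (ext X) T. \<exists>Y. is_cofib_obj B E ext F X T f Y)"

text \<open>The chosen object f \<star> X (well defined up to the defining property when E is cofibred).\<close>
definition star ::
  "('o, 'm) cat \<Rightarrow> ('e, 'f) cat \<Rightarrow> ('e \<Rightarrow> 'o) \<Rightarrow> ('f \<Rightarrow> 'm) \<Rightarrow> 'm \<Rightarrow> 'o \<Rightarrow> 'e \<Rightarrow> 'e" where
  "star B E ext F f T X = (SOME Y. is_cofib_obj B E ext F X T f Y)"

definition tensored ::
  "('o, 'm) cat \<Rightarrow> ('e, 'f) cat \<Rightarrow> ('e \<Rightarrow> 'o) \<Rightarrow> ('f \<Rightarrow> 'm) \<Rightarrow> bool" where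
  "tensored B E ext F \<longleftrightarrow>
     (\<forall>X\<in>Ob E. \<forall>T\<in>Ob B. \<forall>u. u \<subseteq> Hom B (ext X) T \<longrightarrow>
        (\<exists>Y\<in>Ob E. ext Y = T \<and>
           (\<forall>Z\<in>Ob E. Ebar B E ext F Y Z = lift_impl B T (ext Z) (Ebar B E ext F X Z) u)))"

end

theory Submission
  imports Defs
begin

lemma comp_hom:
  assumes "category B" "A \<in> Ob B" "T \<in> Ob B" "C \<in> Ob B" "f \<in> Hom B A T" "g \<in> Hom B T C"
  shows "Comp B g f \<in> Hom B A C"
  using assms unfolding category_def by blast

lemma star_obj:
  assumes "cofibred B E ext F" "X \<in> Ob E" "T \<in> Ob B" "f \<in> Hom B (ext X) T"
  shows "is_cofib_obj B E ext F X T f (star B E ext F f T X)"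
  using assms unfolding cofibred_def star_def by (meson someI_ex)

lemma Ebar_cofib:
  assumes cc: "concrete_category B E ext F" and c: "is_cofib_obj B E ext F X T f Y"
    and X: "X \<in> Ob E" and T: "T \<in> Ob B" and f: "f \<in> Hom B (ext X) T" and Z: "Z \<in> Ob E"
  shows "Ebar B E ext F Y Z = {g \<in> Hom B T (ext Z). Comp B g f \<in> Ebar B E ext F X Z}"
proof -
  have cat: "category B" and eX: "ext X \<in> Ob B" and eZ: "ext Z \<in> Ob B"
    using cc X Z unfolding concrete_category_def by auto
  have eY: "ext Y = T" "Y \<in> Ob E" using c unfolding is_cofib_obj_def by auto
  show ?thesis
  proof (intro set_eqI iffI)
    fix g assume "g \<in> Ebar B E ext F Y Z"
    then have g: "g \<in> Hom B T (ext Z)" "is_Emor E F Y Z g" using eY unfolding Ebar_def by auto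
    then have "is_Emor E F X Z (Comp B g f)" using c Z unfolding is_cofib_obj_def by blast
    moreover have "Comp B g f \<in> Hom B (ext X) (ext Z)" using comp_hom[OF cat eX T eZ f g(1)] .
    ultimately show "g \<in> {g \<in> Hom B T (ext Z). Comp B g f \<in> Ebar B E ext F X Z}"
      using g unfolding Ebar_def by auto
  next
    fix g assume "g \<in> {g \<in> Hom B T (ext Z). Comp B g f \<in> Ebar B E ext F X Z}"
    then have g: "g \<in> Hom B T (ext Z)" "is_Emor E F X Z (Comp B g f)" unfolding Ebar_def by auto
    then have "is_Emor E F Y Z g" using c Z unfolding is_cofib_obj_def by blast
    then show "g \<in> Ebar B E ext F Y Z" using g eY unfolding Ebar_def by auto
  qed
qed

lemma lift_eq:
  assumes cc: "concrete_category B E ext F" and cof: "cofibred B E ext F"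
    and X: "X \<in> Ob E" and T: "T \<in> Ob B" and fs: "fs \<subseteq> Hom B (ext X) T" and Z: "Z \<in> Ob E"
  shows "lift_impl B T (ext Z) (Ebar B E ext F X Z) fs =
         Hom B T (ext Z) \<inter> (\<Inter>f\<in>fs. Ebar B E ext F (star B E ext F f T X) Z)"
proof -
  have "\<And>f. f \<in> fs \<Longrightarrow> Ebar B E ext F (star B E ext F f T X) Z
          = {g \<in> Hom B T (ext Z). Comp B g f \<in> Ebar B E ext F X Z}"
    using Ebar_cofib[OF cc star_obj[OF cof X T] X T _ Z] fs by blast
  then show ?thesis unfolding lift_impl_def by auto
qed

theorem proposition4p3:
  fixes B :: "('o, 'm) cat" and E :: "('e, 'f) cat"
    and ext :: "'e \<Rightarrow> 'o" and F :: "'f \<Rightarrow> 'm"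
  assumes "concrete_category B E ext F"
  shows "tensored B E ext F \<longleftrightarrow>
    (cofibred B E ext F \<and>
     (\<forall>X\<in>Ob E. \<forall>T\<in>Ob B. \<forall>fs. fs \<subseteq> Hom B (ext X) T \<longrightarrow>
        (\<exists>Y\<in>Ob E. ext Y = T \<and>
           (\<forall>Z\<in>Ob E. Ebar B E ext F Y Z =
              Hom B T (ext Z) \<inter> (\<Inter>f\<in>fs. Ebar B E ext F (star B E ext F f T X) Z)))))"
proof
  assume ten: "tensored B E ext F"
  have cat: "category B" using assms unfolding concrete_category_def by auto
  have cof: "cofibred B E ext F"
    unfolding cofibred_def
  proof (intro ballI)
    fix X T f assume X: "X \<in> Ob E" and T: "T \<in> Ob B" and f: "f \<in> Hom B (ext X) T"
    obtain Y where Y: "Y \<in> Ob E" "ext Y = T"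
      "\<forall>Z\<in>Ob E. Ebar B E ext F Y Z = lift_impl B T (ext Z) (Ebar B E ext F X Z) {f}"
      using ten X T f unfolding tensored_def by (metis empty_subsetI insert_subset)
    have eX: "ext X \<in> Ob B" using assms X unfolding concrete_category_def by auto
    have "is_cofib_obj B E ext F X T f Y"
      unfolding is_cofib_obj_def
    proof (intro conjI ballI Y(1,2))
      fix Z g assume Z: "Z \<in> Ob E" and g: "g \<in> Hom B T (ext Z)"
      have eZ: "ext Z \<in> Ob B" using assms Z unfolding concrete_category_def by auto
      have h: "Comp B g f \<in> Hom B (ext X) (ext Z)" using comp_hom[OF cat eX T eZ f g] .
      have "is_Emor E F Y Z g \<longleftrightarrow> g \<in> Ebar B E ext F Y Z" using g Y(2) unfolding Ebar_def by auto
      also have "\<dots> \<longleftrightarrow> Comp B g f \<in> Ebar B E ext F X Z" using Y(3) Z g unfolding lift_impl_def by auto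
      also have "\<dots> \<longleftrightarrow> is_Emor E F X Z (Comp B g f)" using h unfolding Ebar_def by auto
      finally show "is_Emor E F Y Z g \<longleftrightarrow> is_Emor E F X Z (Comp B g f)" .
    qed
    then show "\<exists>Y. is_cofib_obj B E ext F X T f Y" by blast
  qed
  show "cofibred B E ext F \<and>
     (\<forall>X\<in>Ob E. \<forall>T\<in>Ob B. \<forall>fs. fs \<subseteq> Hom B (ext X) T \<longrightarrow>
        (\<exists>Y\<in>Ob E. ext Y = T \<and>
           (\<forall>Z\<in>Ob E. Ebar B E ext F Y Z =
              Hom B T (ext Z) \<inter> (\<Inter>f\<in>fs. Ebar B E ext F (star B E ext F f T X) Z))))"
  proof (intro conjI cof ballI allI impI)
    fix X T fs assume X: "X \<in> Ob E" and T: "T \<in> Ob B" and fs: "fs \<subseteq> Hom B (ext X) T"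
    obtain Y where Y: "Y \<in> Ob E" "ext Y = T"
      "\<forall>Z\<in>Ob E. Ebar B E ext F Y Z = lift_impl B T (ext Z) (Ebar B E ext F X Z) fs"
      using ten X T fs unfolding tensored_def by blast
    then show "\<exists>Y\<in>Ob E. ext Y = T \<and>
           (\<forall>Z\<in>Ob E. Ebar B E ext F Y Z =
              Hom B T (ext Z) \<inter> (\<Inter>f\<in>fs. Ebar B E ext F (star B E ext F f T X) Z))"
      using lift_eq[OF assms cof X T fs] by metis
  qed
next
  assume R: "cofibred B E ext F \<and>
     (\<forall>X\<in>Ob E. \<forall>T\<in>Ob B. \<forall>fs. fs \<subseteq> Hom B (ext X) T \<longrightarrow>
        (\<exists>Y\<in>Ob E. ext Y = T \<and>
           (\<forall>Z\<in>Ob E. Ebar B E ext F Y Z =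
              Hom B T (ext Z) \<inter> (\<Inter>f\<in>fs. Ebar B E ext F (star B E ext F f T X) Z))))"
  show "tensored B E ext F"
    unfolding tensored_def
  proof (intro ballI allI impI)
    fix X T u assume X: "X \<in> Ob E" and T: "T \<in> Ob B" and u: "u \<subseteq> Hom B (ext X) T"
    obtain Y where Y: "Y \<in> Ob E" "ext Y = T"
      "\<forall>Z\<in>Ob E. Ebar B E ext F Y Z =
              Hom B T (ext Z) \<inter> (\<Inter>f\<in>u. Ebar B E ext F (star B E ext F f T X) Z)"
      using R X T u by blast
    then show "\<exists>Y\<in>Ob E. ext Y = T \<and>
           (\<forall>Z\<in>Ob E. Ebar B E ext F Y Z = lift_impl B T (ext Z) (Ebar B E ext F X Z) u)"
      using lift_eq[OF assms conjunct1[OF R] X T u] by metis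
  qed
qed

end
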